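(* For the Grover walk on $\mathbb{T}_\kappa$ ($\kappa\ge3$) started from $\Psi_0=\sum_j\varphi_j|e,\epsilon_j\rangle$, let $W_t$ denote its position at time $t$, i.e. $P(W_t=g)=\sum_{\epsilon\in\Sigma}|\langle g,\epsilon|U^t\Psi_0\rangle|^2$. If $\varphi=\varphi^{U}$ let $X_t$ be the walk on $\mathbb{Z}_+$ with wall defined below with $\gamma=0$, and if $\varphi=\varphi^{WU}$ let $X_t$ be that walk with $\gamma=\pi$. Then for all $t\ge0$ and all $x\in\mathbb{Z}_+$, $P(|W_t|=x)=P(X_t=x)$.
   Context: Fix $\kappa\ge3$. Let $\Sigma=\{\epsilon_0,\dots,\epsilon_{\kappa-1}\}$, $G$ the group generated by $\Sigma$ with relations $\epsilon_i^2=e$; the Cayley tree $\mathbb{T}_\kappa$ has vertices the reduced words in $G$ (root $e$), with $g\sim h$ iff $gh^{-1}\in\Sigma$; $|g|$ is the word length. The Grover walk acts on the Hilbert space with orthonormal basis $\{|g,\epsilon\rangle\}$ by $U|g,\epsilon\rangle=\sum_{\tau\in\Sigma}(-\delta_{\epsilon\tau}+2/\kappa)|\tau g,\tau\rangle$. Initial coin states: $\varphi^{U}$ with $\varphi_j=1/\sqrt\kappa$; $\varphi^{WU}$ with $\varphi_j=\omega_\kappa^{\,j}/\sqrt\kappa$, $\omega_\kappa=e^{2\pi i/\kappa}$. Walk with wall on $\mathbb{Z}_+=\{0,1,2,\dots\}$: let $a_\kappa=2\sqrt{\kappa-1}/\kappa$, $b_\kappa=1-2/\kappa$, $\gamma\in\mathbb{R}$.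 Consider the Hilbert space with orthonormal basis $\{|0,L\rangle\}\cup\{|x,L\rangle,|x,R\rangle: x\ge1\}$ and the unitary $\widetilde U$ given by $\widetilde U|0,L\rangle=e^{i\gamma}|1,R\rangle$ and, for $x\ge1$, $\widetilde U|x,L\rangle=a_\kappa|x-1,L\rangle+b_\kappa|x+1,R\rangle$, $\widetilde U|x,R\rangle=-b_\kappa|x-1,L\rangle+a_\kappa|x+1,R\rangle$. (Equivalently: coin $H_\kappa=\begin{bmatrix}a_\kappa&-b_\kappa\\ b_\kappa&a_\kappa\end{bmatrix}$ in the ordered basis $(|L\rangle,|R\rangle)$ at $x\ge1$, coin $e^{i\gamma}\begin{bmatrix}0&1\\1&0\end{bmatrix}$ at $x=0$, followed by the shift $|x,R\rangle\mapsto|x+1,R\rangle$, $|x,L\rangle\mapsto|x-1,L\rangle$.) With $\Phi_t=\widetilde U^t|0,L\rangle$, the random variable $X_t$ on $\mathbb{Z}_+$ has $P(X_t=0)=|\langle 0,L|\Phi_t\rangle|^2$ and $P(X_t=x)=|\langle x,L|\Phi_t\rangle|^2+|\langle x,R|\Phi_t\rangle|^2$ for $x\ge1$. *)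

theory Defs
  imports Complex_Main
begin

text \<open>Vertices of T_kappa: reduced words over the letters 0..kappa-1 (letter j stands for
  epsilon_j), i.e. lists with all letters < kappa and no two equal adjacent letters.
  The empty list is the root e.\<close>

fun reduced :: "nat list \<Rightarrow> bool" where
  "reduced [] = True"
| "reduced [a] = True"
| "reduced (a # b # w) = (a \<noteq> b \<and> reduced (b # w))"

definition tree_vertex :: "nat \<Rightarrow> nat list \<Rightarrow> bool" where
  "tree_vertex \<kappa> g \<longleftrightarrow> set g \<subseteq> {..<\<kappa>} \<and> reduced g"

fun lmul :: "nat \<Rightarrow> nat list \<Rightarrow> nat list" where
  "lmul \<tau> [] = [\<tau>]"
| "lmul \<tau> (a # w) = (if a = \<tau> then w else \<tau> # a # w)"

text \<open>States: amplitude functions psi(g, epsilon) = <g,epsilon|psi>.\<close>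
type_synonym tree_state = "nat list \<times> nat \<Rightarrow> complex"

definition grover_coef :: "nat \<Rightarrow> nat \<Rightarrow> nat \<Rightarrow> complex" where
  "grover_coef \<kappa> \<epsilon> \<tau> = (if \<epsilon> = \<tau> then -1 else 0) + 2 / of_nat \<kappa>"

text \<open>U|g,eps> = sum_tau (-delta_{eps tau} + 2/kappa) |tau g, tau>; hence
  <h,tau|U psi> = sum_eps (-delta_{eps tau} + 2/kappa) <tau h, eps|psi>, since tau g = h iff g = tau h.\<close>
definition grover_step :: "nat \<Rightarrow> tree_state \<Rightarrow> tree_state" where
  "grover_step \<kappa> \<psi> = (\<lambda>(h, \<tau>).
     if tree_vertex \<kappa> h \<and> \<tau> < \<kappa>
     then (\<Sum>\<epsilon><\<kappa>. grover_coef \<kappa> \<epsilon> \<tau> * \<psi> (lmul \<tau> h, \<epsilon>))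
     else 0)"

definition grover_init :: "nat \<Rightarrow> (nat \<Rightarrow> complex) \<Rightarrow> tree_state" where
  "grover_init \<kappa> \<phi> = (\<lambda>(g, \<epsilon>). if g = [] \<and> \<epsilon> < \<kappa> then \<phi> \<epsilon> else 0)"

definition grover_state :: "nat \<Rightarrow> (nat \<Rightarrow> complex) \<Rightarrow> nat \<Rightarrow> tree_state" where
  "grover_state \<kappa> \<phi> t = (grover_step \<kappa> ^^ t) (grover_init \<kappa> \<phi>)"

definition tree_dist_prob :: "nat \<Rightarrow> (nat \<Rightarrow> complex) \<Rightarrow> nat \<Rightarrow> nat \<Rightarrow> real" where
  "tree_dist_prob \<kappa> \<phi> t x =
     (\<Sum>g\<in>{g. tree_vertex \<kappa> g \<and> length g = x}.
        \<Sum>\<epsilon><\<kappa>. (cmod (grover_state \<kappa> \<phi> t (g, \<epsilon>)))\<^sup>2)"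

definition phiU :: "nat \<Rightarrow> nat \<Rightarrow> complex" where
  "phiU \<kappa> j = 1 / of_real (sqrt (real \<kappa>))"

definition phiWU :: "nat \<Rightarrow> nat \<Rightarrow> complex" where
  "phiWU \<kappa> j = cis (2 * pi / real \<kappa>) ^ j / of_real (sqrt (real \<kappa>))"

text \<open>States: amplitude functions on nat \<times> bool; (x, False) = |x,L>, (x, True) = |x,R>.
  The basis vector |0,R> does not exist; its amplitude is kept at 0.\<close>
type_synonym line_state = "nat \<times> bool \<Rightarrow> complex"

definition a_k :: "nat \<Rightarrow> real" where "a_k \<kappa> = 2 * sqrt (real \<kappa> - 1) / real \<kappa>"
definition b_k :: "nat \<Rightarrow> real" where "b_k \<kappa> = 1 - 2 / real \<kappa>"

definition wall_step :: "nat \<Rightarrow> real \<Rightarrow> line_state \<Rightarrow> line_state" where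
  "wall_step \<kappa> \<gamma> \<psi> = (\<lambda>(y, r).
     if \<not> r then of_real (a_k \<kappa>) * \<psi> (y + 1, False) - of_real (b_k \<kappa>) * \<psi> (y + 1, True)
     else if y = 0 then 0
     else if y = 1 then cis \<gamma> * \<psi> (0, False)
     else of_real (b_k \<kappa>) * \<psi> (y - 1, False) + of_real (a_k \<kappa>) * \<psi> (y - 1, True))"

definition wall_state :: "nat \<Rightarrow> real \<Rightarrow> nat \<Rightarrow> line_state" where
  "wall_state \<kappa> \<gamma> t = (wall_step \<kappa> \<gamma> ^^ t) (\<lambda>(y, r). if y = 0 \<and> \<not> r then 1 else 0)"

definition wall_prob :: "nat \<Rightarrow> real \<Rightarrow> nat \<Rightarrow> nat \<Rightarrow> real" where
  "wall_prob \<kappa> \<gamma> t x =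
     (if x = 0 then (cmod (wall_state \<kappa> \<gamma> t (0, False)))\<^sup>2
      else (cmod (wall_state \<kappa> \<gamma> t (x, False)))\<^sup>2 + (cmod (wall_state \<kappa> \<gamma> t (x, True)))\<^sup>2)"

end

theory Submission imports Defs begin

lemma reduced_tl: "reduced (a # w) \<Longrightarrow> reduced w"
  by (cases w) auto

lemma tv_cons: "tree_vertex k (a # w) \<longleftrightarrow> a < k \<and> tree_vertex k w \<and> (w = [] \<or> hd w \<noteq> a)"
  unfolding tree_vertex_def by (cases w) auto

lemma tv_lmul: "tree_vertex k h \<Longrightarrow> t < k \<Longrightarrow> tree_vertex k (lmul t h)"
  by (cases h) (auto simp: tv_cons)

lemma sum_if_one:
  fixes A B :: "'a::comm_ring_1"
  assumes "j < k"
  shows "(\<Sum>e<k. if e = j then A else B) = A + of_nat (k - 1) * B"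
proof -
  have "(\<Sum>e<k. if e = j then A else B) = (\<Sum>e\<in>{..<k}-{j}. B) + A"
    using assms by (subst sum.remove[of _ j]) (auto intro!: sum.cong)
  also have "\<dots> = A + of_nat (k - 1) * B" using assms by simp
  finally show ?thesis .
qed

lemma coef_sum:
  assumes "t < k"
  shows "(\<Sum>e<k. grover_coef k e t * f e) = - f t + 2 / of_nat k * (\<Sum>e<k. f e)"
proof -
  have "(\<Sum>e<k. grover_coef k e t * f e) = (\<Sum>e<k. (if e = t then - f e else 0)) + (\<Sum>e<k. 2 / of_nat k * f e)"
  proof -
    have "\<And>e. grover_coef k e t * f e = (if e = t then - f e else 0) + 2 / of_nat k * f e"
      unfolding grover_coef_def by (simp add: algebra_simps)
    then show ?thesis by (simp add: sum.distrib)
  qed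
  also have "(\<Sum>e<k. (if e = t then - f e else 0)) = - f t" using assms by (simp add: sum.delta)
  finally show ?thesis by (simp add: sum_distrib_left)
qed

definition rr :: "nat \<Rightarrow> real" where "rr k = sqrt (real k - 1)"

definition ans :: "nat \<Rightarrow> (nat \<Rightarrow> complex) \<Rightarrow> real \<Rightarrow> nat \<Rightarrow> tree_state" where
  "ans k \<phi> \<gamma> t = (\<lambda>(g, e). if tree_vertex k g \<and> e < k then
      \<phi> (if g = [] then e else last g) *
      (if g \<noteq> [] \<and> e = hd g then wall_state k \<gamma> t (length g, True) / of_real (rr k ^ (length g - 1))
       else wall_state k \<gamma> t (length g, False) / of_real (rr k ^ length g))
     else 0)"

lemma rr_facts:
  assumes "k \<ge> 3"
  shows "rr k > 0" "(complex_of_real (rr k))^2 = of_nat k - 1"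
    "complex_of_real (a_k k) = 2 * of_real (rr k) / of_nat k"
    "complex_of_real (b_k k) = 1 - 2 / of_nat k"
proof -
  show "rr k > 0" using assms by (simp add: rr_def)
  have "(rr k)^2 = real k - 1" using assms by (simp add: rr_def)
  then have "complex_of_real ((rr k)^2) = of_real (real k - 1)" by simp
  then show "(complex_of_real (rr k))^2 = of_nat k - 1" by simp
  show "complex_of_real (a_k k) = 2 * of_real (rr k) / of_nat k" by (simp add: a_k_def rr_def)
  show "complex_of_real (b_k k) = 1 - 2 / of_nat k" by (simp add: b_k_def)
qed

lemma wall_state_Suc: "wall_state k \<gamma> (Suc t) = wall_step k \<gamma> (wall_state k \<gamma> t)"
  by (simp add: wall_state_def)

lemma grover_state_Suc: "grover_state k \<phi> (Suc t) = grover_step k (grover_state k \<phi> t)"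
  by (simp add: grover_state_def)

lemma main_ansatz:
  assumes k3: "k \<ge> 3"
    and phi: "\<And>t. t < k \<Longrightarrow> (\<Sum>e<k. grover_coef k e t * \<phi> e) = cis \<gamma> * \<phi> t"
  shows "grover_state k \<phi> t = ans k \<phi> \<gamma> t"
proof (induction t)
  case 0
  show ?case
    by (auto simp: grover_state_def grover_init_def ans_def wall_state_def tree_vertex_def fun_eq_iff)
next
  case (Suc t)
  define W where "W = wall_state k \<gamma> t"
  define R where "R = complex_of_real (rr k)"
  have R0: "R \<noteq> 0" using rr_facts(1)[OF k3] by (simp add: R_def)
  have K0: "(of_nat k::complex) \<noteq> 0" using k3 by simp
  have R2: "R*R = of_nat k - 1" using rr_facts(2)[OF k3] by (simp add: R_def power2_eq_square)
  have KR: "(of_nat k::complex) = 1 + R * R" using R2 by simp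
  have Km1: "(of_nat (k - Suc 0)::complex) = of_nat k - 1" using k3 by (simp add: of_nat_diff)
  have A: "complex_of_real (a_k k) = 2 * R / of_nat k" using rr_facts(3)[OF k3] by (simp add: R_def)
  have B: "complex_of_real (b_k k) = 1 - 2 / of_nat k" using rr_facts(4)[OF k3] by simp
  have "grover_step k (ans k \<phi> \<gamma> t) (h, \<tau>) = ans k \<phi> \<gamma> (Suc t) (h, \<tau>)" for h \<tau>
  proof (cases "tree_vertex k h \<and> \<tau> < k")
    case False
    then show ?thesis by (auto simp: grover_step_def ans_def)
  next
    case True
    then have hv: "tree_vertex k h" and tk: "\<tau> < k" by auto
    have lv: "tree_vertex k (lmul \<tau> h)" using tv_lmul[OF hv tk] .
    have step: "grover_step k (ans k \<phi> \<gamma> t) (h, \<tau>) =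
        (\<Sum>e<k. grover_coef k e \<tau> * ans k \<phi> \<gamma> t (lmul \<tau> h, e))"
      using True by (simp add: grover_step_def)
    show ?thesis
    proof (cases h)
      case Nil
      have "(\<Sum>e<k. grover_coef k e \<tau> * ans k \<phi> \<gamma> t (lmul \<tau> h, e)) =
         (\<Sum>e<k. grover_coef k e \<tau> * (\<phi> \<tau> * (if e = \<tau> then W (1, True) else W (1, False) / R)))"
        using Nil lv by (intro sum.cong) (auto simp: ans_def W_def R_def)
      also have "\<dots> = \<phi> \<tau> * (of_real (a_k k) * W (1, False) - of_real (b_k k) * W (1, True))"
        apply (subst coef_sum[OF tk])
        apply (subst sum_distrib_left[symmetric])
        apply (subst sum_if_one[OF tk])
        using R0 K0 R2 by (simp add: A B Km1 field_simps) (simp add: KR algebra_simps)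
      finally show ?thesis using step Nil True
        by (simp add: ans_def wall_state_Suc wall_step_def W_def)
    next
      case (Cons c h')
      show ?thesis
      proof (cases "c = \<tau>")
        case ct: True
        show ?thesis
        proof (cases h')
          case Nil
          have "(\<Sum>e<k. grover_coef k e \<tau> * ans k \<phi> \<gamma> t (lmul \<tau> h, e)) =
             (\<Sum>e<k. grover_coef k e \<tau> * \<phi> e * W (0, False))"
            using Nil Cons ct lv by (intro sum.cong) (auto simp: ans_def W_def)
          also have "\<dots> = cis \<gamma> * \<phi> \<tau> * W (0, False)"
            using phi[OF tk] by (simp add: sum_distrib_right[symmetric])
          finally show ?thesis using step Nil Cons ct True
            by (simp add: ans_def wall_state_Suc wall_step_def W_def)
        next
          case (Cons d h'')
          have hh: "h = \<tau> # d # h''" using Cons \<open>h = c # h'\<close> ct by simp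
          have dk: "d < k" and dt: "d \<noteq> \<tau>" and v2: "tree_vertex k (d # h'')"
            using hv unfolding hh by (auto simp: tv_cons)
          define m where "m = length h''"
          have "(\<Sum>e<k. grover_coef k e \<tau> * ans k \<phi> \<gamma> t (lmul \<tau> h, e)) =
             (\<Sum>e<k. grover_coef k e \<tau> * (\<phi> (last (d # h'')) * (if e = d then W (Suc m, True) / R^m else W (Suc m, False) / R^(Suc m))))"
            using hh v2 by (intro sum.cong) (auto simp: ans_def W_def R_def m_def)
          also have "\<dots> = \<phi> (last (d # h'')) * (of_real (b_k k) * W (Suc m, False) + of_real (a_k k) * W (Suc m, True)) / R^(Suc m)"
            apply (subst coef_sum[OF tk])
            apply (subst sum_distrib_left[symmetric])
            apply (subst sum_if_one[OF dk])
            using R0 K0 R2 dt by (simp add: A B Km1 field_simps)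
          finally show ?thesis using step hh True
            by (simp add: ans_def wall_state_Suc wall_step_def W_def R_def m_def)
        qed
      next
        case False
        have hh: "h = c # h'" using Cons by simp
        have v2: "tree_vertex k (\<tau> # c # h')"
          using hv tk False unfolding hh by (auto simp: tv_cons)
        define x where "x = length h"
        have "(\<Sum>e<k. grover_coef k e \<tau> * ans k \<phi> \<gamma> t (lmul \<tau> h, e)) =
           (\<Sum>e<k. grover_coef k e \<tau> * (\<phi> (last h) * (if e = \<tau> then W (Suc x, True) / R^x else W (Suc x, False) / R^(Suc x))))"
          using hh v2 False by (intro sum.cong) (auto simp: ans_def W_def R_def x_def)
        also have "\<dots> = \<phi> (last h) * (of_real (a_k k) * W (Suc x, False) - of_real (b_k k) * W (Suc x, True)) / R^x"
          apply (subst coef_sum[OF tk])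
          apply (subst sum_distrib_left[symmetric])
          apply (subst sum_if_one[OF tk])
          using R0 K0 R2 by (simp add: A B Km1 field_simps) (simp add: KR algebra_simps)
        finally show ?thesis using step hh True False
          by (simp add: ans_def wall_state_Suc wall_step_def W_def R_def x_def)
      qed
    qed
  qed
  note H = this
  show ?case unfolding grover_state_Suc Suc.IH
  proof (rule ext)
    fix p show "grover_step k (ans k \<phi> \<gamma> t) p = ans k \<phi> \<gamma> (Suc t) p"
      using H[of "fst p" "snd p"] by simp
  qed
qed

definition VV :: "nat \<Rightarrow> nat \<Rightarrow> nat list set" where
  "VV k n = {g. tree_vertex k g \<and> length g = n}"

lemma VV_finite: "finite (VV k n)"
  by (rule finite_subset[OF _ finite_lists_length_eq[OF finite_lessThan[of k], of n]])
     (auto simp: VV_def tree_vertex_def)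

lemma VV_0: "VV k 0 = {[]}"
  by (auto simp: VV_def tree_vertex_def)

lemma VV_1: "VV k (Suc 0) = (\<lambda>a. [a]) ` {..<k}"
  by (auto simp: VV_def tree_vertex_def length_Suc_conv)

lemma VV_SS: "VV k (Suc (Suc n)) = (\<lambda>(g, a). a # g) ` Sigma (VV k (Suc n)) (\<lambda>g. {..<k} - {hd g})"
proof
  show "VV k (Suc (Suc n)) \<subseteq> (\<lambda>(g, a). a # g) ` Sigma (VV k (Suc n)) (\<lambda>g. {..<k} - {hd g})"
  proof
    fix g assume "g \<in> VV k (Suc (Suc n))"
    then obtain a w where g: "g = a # w" and "tree_vertex k (a # w)" "length w = Suc n"
      by (auto simp: VV_def length_Suc_conv)
    then show "g \<in> (\<lambda>(g, a). a # g) ` Sigma (VV k (Suc n)) (\<lambda>g. {..<k} - {hd g})"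
      by (auto simp: VV_def tv_cons image_iff intro!: bexI[of _ "(w, a)"])
  qed
  show "(\<lambda>(g, a). a # g) ` Sigma (VV k (Suc n)) (\<lambda>g. {..<k} - {hd g}) \<subseteq> VV k (Suc (Suc n))"
    by (auto simp: VV_def tv_cons)
qed

lemma VV_card: "card (VV k (Suc n)) = k * (k - 1) ^ n"
proof (induction n)
  case 0
  show ?case by (simp add: VV_1 card_image inj_on_def)
next
  case (Suc n)
  have inj: "inj_on (\<lambda>(g, a). a # g) X" for X :: "(nat list \<times> nat) set"
    by (auto simp: inj_on_def)
  have hk: "g \<in> VV k (Suc n) \<Longrightarrow> hd g < k" for g
    by (cases g) (auto simp: VV_def tv_cons)
  have "card (VV k (Suc (Suc n))) = card (Sigma (VV k (Suc n)) (\<lambda>g. {..<k} - {hd g}))"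
    unfolding VV_SS by (rule card_image[OF inj])
  also have "\<dots> = (\<Sum>g\<in>VV k (Suc n). card ({..<k} - {hd g}))"
    by (rule card_SigmaI) (auto simp: VV_finite)
  also have "\<dots> = (\<Sum>g\<in>VV k (Suc n). k - 1)"
    by (intro sum.cong) (auto simp: hk)
  also have "\<dots> = k * (k - 1) ^ Suc n" using Suc by simp
  finally show ?case .
qed

lemma prob_ansatz:
  assumes k3: "k \<ge> 3"
    and nphi: "\<And>j. j < k \<Longrightarrow> (cmod (\<phi> j))^2 = 1 / real k"
    and gs: "grover_state k \<phi> t = ans k \<phi> \<gamma> t"
  shows "tree_dist_prob k \<phi> t x = wall_prob k \<gamma> t x"
proof -
  define W where "W = wall_state k \<gamma> t"
  define r where "r = rr k"
  have r0: "r > 0" using rr_facts(1)[OF k3] by (simp add: r_def)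
  have r2: "r^2 = real k - 1" using k3 by (simp add: r_def rr_def)
  have pw: "(r ^ n)^2 = (real k - 1) ^ n" for n
    by (metis power_mult_distrib power_even_eq mult.commute r2 power_mult)
  have k0: "real k > 0" using k3 by simp
  have TD: "tree_dist_prob k \<phi> t x = (\<Sum>g\<in>VV k x. \<Sum>e<k. (cmod (ans k \<phi> \<gamma> t (g, e)))\<^sup>2)"
    by (simp add: tree_dist_prob_def VV_def gs)
  show ?thesis
  proof (cases x)
    case 0
    have "(\<Sum>e<k. (cmod (ans k \<phi> \<gamma> t ([], e)))\<^sup>2) = (\<Sum>e<k. (1 / real k) * (cmod (W (0, False)))^2)"
      by (intro sum.cong) (auto simp: ans_def tree_vertex_def W_def norm_mult power_mult_distrib nphi)
    also have "\<dots> = (cmod (W (0, False)))^2" using k0 by simp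
    finally have "(\<Sum>e<k. (cmod (ans k \<phi> \<gamma> t ([], e)))\<^sup>2) = (cmod (W (0, False)))^2" .
    then show ?thesis unfolding TD using 0 by (simp add: VV_0 wall_prob_def W_def)
  next
    case (Suc n)
    define C where "C = ((cmod (W (x, True)))^2 + (cmod (W (x, False)))^2) / (real k * (real k - 1) ^ n)"
    have "(\<Sum>e<k. (cmod (ans k \<phi> \<gamma> t (g, e)))\<^sup>2) = C" if g: "g \<in> VV k x" for g
    proof -
      obtain c w where gc: "g = c # w" using g Suc by (cases g) (auto simp: VV_def)
      have gv: "tree_vertex k g" and lg: "length g = Suc n" using g Suc by (auto simp: VV_def)
      have ck: "c < k" using gv gc by (simp add: tv_cons)
      have lk: "last g < k" using gv gc unfolding tree_vertex_def by (metis in_mono last_in_set lessThan_iff list.distinct(1))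
      have hdg: "hd g = c" "g \<noteq> []" using gc by auto
      have ae: "ans k \<phi> \<gamma> t (g, e) = \<phi> (last g) * (if e = c then W (x, True) / of_real r ^ n else W (x, False) / of_real r ^ Suc n)"
        if "e < k" for e
        using that gv hdg lg Suc by (simp add: ans_def W_def r_def del: power_Suc)
      have nr: "(cmod (complex_of_real r ^ m))^2 = (real k - 1) ^ m" for m
        using pw r0 by (simp add: norm_power abs_of_pos)
      have "(\<Sum>e<k. (cmod (ans k \<phi> \<gamma> t (g, e)))\<^sup>2) =
          (\<Sum>e<k. if e = c then (1 / real k) * (cmod (W (x, True)))^2 / (real k - 1) ^ n
                   else (1 / real k) * (cmod (W (x, False)))^2 / (real k - 1) ^ Suc n)"
        by (intro sum.cong refl)
          (simp add: ae norm_mult norm_divide power_mult_distrib power_divide nphi lk nr del: power_Suc)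
      also have "\<dots> = C"
        apply (subst sum_if_one[OF ck])
        using k3 k0 by (simp add: C_def field_simps of_nat_diff)
      finally show ?thesis .
    qed
    then have "tree_dist_prob k \<phi> t x = (\<Sum>g\<in>VV k x. C)" by (simp add: TD)
    also have "\<dots> = real (k * (k - 1) ^ n) * C" using Suc by (simp add: VV_card)
    also have "\<dots> = (cmod (W (x, True)))^2 + (cmod (W (x, False)))^2"
      using k3 by (simp add: C_def of_nat_diff)
    finally show ?thesis using Suc by (simp add: wall_prob_def W_def)
  qed
qed

lemma phiU_norm: "k \<ge> 3 \<Longrightarrow> j < k \<Longrightarrow> (cmod (phiU k j))^2 = 1 / real k"
  by (simp add: phiU_def norm_divide power_divide)

lemma phiU_sum: assumes "k \<ge> 3" "t < k"
  shows "(\<Sum>e<k. grover_coef k e t * phiU k e) = cis 0 * phiU k t"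
proof -
  have "(\<Sum>e<k. phiU k e) = of_nat k * phiU k t" by (simp add: phiU_def)
  then show ?thesis using assms by (simp add: coef_sum)
qed

lemma root_sum: assumes "k \<ge> 3" shows "(\<Sum>j<k. cis (2 * pi / real k) ^ j) = 0"
proof -
  have kp: "real k > 0" using assms by simp
  have "cis (2 * pi / real k) ^ k = 1" using kp by (simp add: DeMoivre)
  moreover have "cis (2 * pi / real k) \<noteq> 1"
  proof
    assume "cis (2 * pi / real k) = 1"
    then have "sin (2 * pi / real k) = 0" by (metis cis.sel(2) one_complex.sel(2))
    moreover have "sin (2 * pi / real k) > 0"
      using assms by (intro sin_gt_zero) (auto simp: field_simps)
    ultimately show False by simp
  qed
  ultimately show ?thesis by (simp add: sum_gp_strict)
qed

lemma phiWU_norm: "k \<ge> 3 \<Longrightarrow> j < k \<Longrightarrow> (cmod (phiWU k j))^2 = 1 / real k"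
  by (simp add: phiWU_def norm_divide power_divide norm_power)

lemma phiWU_sum: assumes "k \<ge> 3" "t < k"
  shows "(\<Sum>e<k. grover_coef k e t * phiWU k e) = cis pi * phiWU k t"
proof -
  have "(\<Sum>e<k. phiWU k e) = (\<Sum>j<k. cis (2 * pi / real k) ^ j) / of_real (sqrt (real k))"
    by (simp add: phiWU_def sum_divide_distrib)
  then have "(\<Sum>e<k. phiWU k e) = 0" using root_sum[OF assms(1)] by simp
  then show ?thesis using assms by (simp add: coef_sum)
qed

theorem mainTheorem2:
  fixes \<kappa> t x :: nat
  assumes "\<kappa> \<ge> 3"
  shows "tree_dist_prob \<kappa> (phiU \<kappa>) t x = wall_prob \<kappa> 0 t x
       \<and> tree_dist_prob \<kappa> (phiWU \<kappa>) t x = wall_prob \<kappa> pi t x"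
proof
  show "tree_dist_prob \<kappa> (phiU \<kappa>) t x = wall_prob \<kappa> 0 t x"
    by (rule prob_ansatz[OF assms phiU_norm[OF assms] main_ansatz[OF assms phiU_sum[OF assms]]])
  show "tree_dist_prob \<kappa> (phiWU \<kappa>) t x = wall_prob \<kappa> pi t x"
    by (rule prob_ansatz[OF assms phiWU_norm[OF assms] main_ansatz[OF assms phiWU_sum[OF assms]]])
qed

end
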